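(* For every finite metric $(V,d)$ with root $r$, every $M>0$, and every Level-Prim tree $\mathcal H$ of $G$ (with respect to $r$ and $M$), we have $d(\mathcal H)\le 8\cdot\mathrm{MST}(G)$.
   Context: Levels: $V_0=\{u:d(r,u)\le M\}$, and for $i\ge1$, $V_i=\{u:2^{i-1}M<d(r,u)\le2^iM\}$. Write $V_{\le i}=\bigcup_{j\le i}V_j$ and $V_{<i}=V_{\le i-1}$, with $V_{<0}=\emptyset$. $G$ is the complete graph on $V$ weighted by $d$. $G[U]$ is the induced subgraph, and $G/U$ contracts $U$ to one vertex, keeping parallel edges. $\mathrm{MST}(G)$ is the minimum spanning tree weight, and $d(F)$ is the total weight of an edge set $F$. Level-Prim tree: $H_i$ is a minimum spanning tree of $G[V_{\le i}]/V_{<i}$, viewed as edges of $G$, and $\mathcal H=\bigcup_{i\ge0}H_i$. *)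

theory Defs
  imports Complex_Main "HOL-Library.Uprod"
begin

definition finite_metric :: "'a set \<Rightarrow> ('a \<Rightarrow> 'a \<Rightarrow> real) \<Rightarrow> bool" where
  "finite_metric V d \<longleftrightarrow> finite V \<and>
     (\<forall>x\<in>V. d x x = 0) \<and>
     (\<forall>x\<in>V. \<forall>y\<in>V. x \<noteq> y \<longrightarrow> d x y > 0) \<and>
     (\<forall>x\<in>V. \<forall>y\<in>V. d x y = d y x) \<and>
     (\<forall>x\<in>V. \<forall>y\<in>V. \<forall>z\<in>V. d x z \<le> d x y + d y z)"

definition level :: "'a set \<Rightarrow> ('a \<Rightarrow> 'a \<Rightarrow> real) \<Rightarrow> 'a \<Rightarrow> real \<Rightarrow> nat \<Rightarrow> 'a set" where
  "level V d r M i =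
     (if i = 0 then {u\<in>V. d r u \<le> M}
      else {u\<in>V. 2 ^ (i - 1) * M < d r u \<and> d r u \<le> 2 ^ i * M})"

definition level_le :: "'a set \<Rightarrow> ('a \<Rightarrow> 'a \<Rightarrow> real) \<Rightarrow> 'a \<Rightarrow> real \<Rightarrow> nat \<Rightarrow> 'a set" where
  "level_le V d r M i = (\<Union>j\<in>{..i}. level V d r M j)"

definition level_lt :: "'a set \<Rightarrow> ('a \<Rightarrow> 'a \<Rightarrow> real) \<Rightarrow> 'a \<Rightarrow> real \<Rightarrow> nat \<Rightarrow> 'a set" where
  "level_lt V d r M i = (\<Union>j\<in>{..<i}. level V d r M j)"

text \<open>Edges of the complete graph G are unordered pairs Upair u v with u \<noteq> v.
  The weight of an edge is d u v; the weight of an edge set is the sum.\<close>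
definition edge_len :: "('a \<Rightarrow> 'a \<Rightarrow> real) \<Rightarrow> 'a uprod \<Rightarrow> real" where
  "edge_len d e = (THE x. \<exists>u v. e = Upair u v \<and> x = d u v)"

definition weight :: "('a \<Rightarrow> 'a \<Rightarrow> real) \<Rightarrow> 'a uprod set \<Rightarrow> real" where
  "weight d F = (\<Sum>e\<in>F. edge_len d e)"

text \<open>Contraction map of G[U]/W: vertices of W become the single vertex None
  (when W is empty nothing is contracted).\<close>
definition contr :: "'a set \<Rightarrow> 'a \<Rightarrow> 'a option" where
  "contr W x = (if x \<in> W then None else Some x)"

text \<open>Edges of the multigraph G[U]/W, viewed as edges of G: edges of G[U] that do not
  become loops (i.e. not both endpoints in W). Parallel edges are kept since distinct
  edges of G are distinct edges.\<close>
definition contr_edges :: "'a set \<Rightarrow> 'a set \<Rightarrow> 'a uprod set" where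
  "contr_edges U W = {Upair u v | u v. u \<in> U \<and> v \<in> U \<and> u \<noteq> v \<and> \<not> (u \<in> W \<and> v \<in> W)}"

text \<open>F (a set of edges of G) is a spanning tree of G[U]/W: a connected spanning
  subgraph of the contracted multigraph with (number of vertices - 1) edges.\<close>
definition spanning_tree_contr :: "'a set \<Rightarrow> 'a set \<Rightarrow> 'a uprod set \<Rightarrow> bool" where
  "spanning_tree_contr U W F \<longleftrightarrow>
     F \<subseteq> contr_edges U W \<and> finite F \<and>
     card F + 1 = card (contr W ` U) \<and>
     (\<forall>x\<in>U. \<forall>y\<in>U. (contr W x, contr W y) \<in>
        {(contr W u, contr W v) | u v. Upair u v \<in> F}\<^sup>*)"

definition MST_contr :: "('a \<Rightarrow> 'a \<Rightarrow> real) \<Rightarrow> 'a set \<Rightarrow> 'a set \<Rightarrow> 'a uprod set \<Rightarrow> bool" where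
  "MST_contr d U W F \<longleftrightarrow> spanning_tree_contr U W F \<and>
     (\<forall>F'. spanning_tree_contr U W F' \<longrightarrow> weight d F \<le> weight d F')"

definition MST_weight :: "'a set \<Rightarrow> ('a \<Rightarrow> 'a \<Rightarrow> real) \<Rightarrow> real" where
  "MST_weight V d = Min {weight d F | F. spanning_tree_contr V {} F}"

definition level_prim_tree :: "'a set \<Rightarrow> ('a \<Rightarrow> 'a \<Rightarrow> real) \<Rightarrow> 'a \<Rightarrow> real \<Rightarrow> 'a uprod set \<Rightarrow> bool" where
  "level_prim_tree V d r M H \<longleftrightarrow>
     (\<exists>Hs :: nat \<Rightarrow> 'a uprod set.
        (\<forall>i. MST_contr d (level_le V d r M i) (level_lt V d r M i) (Hs i)) \<and>
        H = (\<Union>i. Hs i))"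

end

theory Submission
  imports Defs
begin


definition relE :: "'a set \<Rightarrow> 'a uprod set \<Rightarrow> ('a option \<times> 'a option) set" where
  "relE W E = {(contr W u, contr W v) | u v. Upair u v \<in> E}"

lemma relE_sym: "sym (relE W E)"
  unfolding relE_def sym_def by (auto, metis Upair_inject)

lemma relE_mono: "E \<subseteq> E' \<Longrightarrow> relE W E \<subseteq> relE W E'"
  unfolding relE_def by auto

lemma rtr_sym: "(a,b) \<in> (relE W E)\<^sup>* \<Longrightarrow> (b,a) \<in> (relE W E)\<^sup>*"
  by (meson relE_sym sym_rtrancl symD)

lemma crossing:
  assumes "(a,b) \<in> R\<^sup>*" "a \<in> S" "b \<notin> S"
  shows "\<exists>p q. (p,q) \<in> R \<and> p \<in> S \<and> q \<notin> S"
  using assms by (induction rule: rtrancl_induct) auto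

lemma prim:
  assumes finU: "finite U" and ne: "x0 \<in> U" and EU: "E \<subseteq> contr_edges U W" and finE: "finite E"
    and conn: "\<forall>x\<in>U. \<forall>y\<in>U. (contr W x, contr W y) \<in> (relE W E)\<^sup>*"
  shows "\<exists>F\<subseteq>E. spanning_tree_contr U W F"
proof -
  define X where "X = contr W ` U"
  define z0 where "z0 = contr W x0"
  have finX: "finite X" using finU X_def by auto
  have z0X: "z0 \<in> X" using ne X_def z0_def by auto
  have claim: "\<And>n. Suc n \<le> card X \<Longrightarrow> \<exists>S F. S \<subseteq> X \<and> card S = Suc n \<and> z0 \<in> S \<and> F \<subseteq> E \<and> card F = n
      \<and> relE W F \<subseteq> S \<times> S \<and> (\<forall>z\<in>S. (z0,z) \<in> (relE W F)\<^sup>*)"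
  proof -
    fix n show "Suc n \<le> card X \<Longrightarrow> \<exists>S F. S \<subseteq> X \<and> card S = Suc n \<and> z0 \<in> S \<and> F \<subseteq> E \<and> card F = n
      \<and> relE W F \<subseteq> S \<times> S \<and> (\<forall>z\<in>S. (z0,z) \<in> (relE W F)\<^sup>*)"
    proof (induction n)
      case 0
      show ?case
        by (rule exI[of _ "{z0}"], rule exI[of _ "{}"]) (auto simp: z0X relE_def)
    next
      case (Suc n)
      then obtain S F where SF: "S \<subseteq> X" "card S = Suc n" "z0 \<in> S" "F \<subseteq> E" "card F = n"
        "relE W F \<subseteq> S \<times> S" "\<forall>z\<in>S. (z0,z) \<in> (relE W F)\<^sup>*" by auto
      have "S \<noteq> X" using SF(2) Suc.prems by auto
      then obtain z where z: "z \<in> X" "z \<notin> S" using SF(1) by auto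
      then obtain u where u: "u \<in> U" "z = contr W u" using X_def by auto
      have "(z0, z) \<in> (relE W E)\<^sup>*" using conn ne u z0_def by auto
      then obtain p q where pq: "(p,q) \<in> relE W E" "p \<in> S" "q \<notin> S"
        using crossing[of z0 z _ S] SF(3) z(2) by blast
      then obtain a b where ab: "p = contr W a" "q = contr W b" "Upair a b \<in> E"
        unfolding relE_def by auto
      have "b \<in> U" using ab(3) EU unfolding contr_edges_def by auto
      hence qX: "q \<in> X" using ab X_def by auto
      have eF: "Upair a b \<notin> F"
      proof
        assume "Upair a b \<in> F"
        hence "(p,q) \<in> relE W F" using ab unfolding relE_def by auto
        thus False using SF(6) pq by auto
      qed
      have finF: "finite F" using SF(4) finE finite_subset by auto
      have finS: "finite S" using SF(1) finX finite_subset by auto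
      have r1: "relE W (insert (Upair a b) F) \<subseteq> insert q S \<times> insert q S"
      proof
        fix x assume "x \<in> relE W (insert (Upair a b) F)"
        then obtain c e where ce: "x = (contr W c, contr W e)" "Upair c e \<in> insert (Upair a b) F"
          unfolding relE_def by auto
        show "x \<in> insert q S \<times> insert q S"
        proof (cases "Upair c e \<in> F")
          case True
          hence "x \<in> relE W F" using ce unfolding relE_def by auto
          thus ?thesis using SF(6) by auto
        next
          case False
          hence "Upair c e = Upair a b" using ce by auto
          thus ?thesis using ce ab pq by auto
        qed
      qed
      have mono: "(relE W F)\<^sup>* \<subseteq> (relE W (insert (Upair a b) F))\<^sup>*"
        by (rule rtrancl_mono, rule relE_mono) auto
      have "(p,q) \<in> relE W (insert (Upair a b) F)" using ab unfolding relE_def by auto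
      moreover have "(z0,p) \<in> (relE W (insert (Upair a b) F))\<^sup>*" using SF(7) pq mono by auto
      ultimately have "(z0,q) \<in> (relE W (insert (Upair a b) F))\<^sup>*" by auto
      hence r2: "\<forall>z\<in>insert q S. (z0,z) \<in> (relE W (insert (Upair a b) F))\<^sup>*" using SF(7) mono by auto
      show ?case
        apply (rule exI[of _ "insert q S"], rule exI[of _ "insert (Upair a b) F"])
        using SF qX pq eF finF finS r1 r2 ab by auto
    qed
  qed
  have cX: "card X \<ge> 1" using z0X finX by (metis One_nat_def Suc_leI card_gt_0_iff empty_iff)
  obtain S F where SF: "S \<subseteq> X" "card S = card X" "z0 \<in> S" "F \<subseteq> E" "card F + 1 = card X"
        "relE W F \<subseteq> S \<times> S" "\<forall>z\<in>S. (z0,z) \<in> (relE W F)\<^sup>*"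
    using claim[of "card X - 1"] cX by auto
  have SX: "S = X" using SF(1,2) finX card_subset_eq by blast
  have finF: "finite F" using SF(4) finE finite_subset by auto
  have "\<forall>x\<in>U. \<forall>y\<in>U. (contr W x, contr W y) \<in> (relE W F)\<^sup>*"
  proof (intro ballI)
    fix x y assume "x \<in> U" "y \<in> U"
    hence "(z0, contr W x) \<in> (relE W F)\<^sup>*" "(z0, contr W y) \<in> (relE W F)\<^sup>*" using SF(7) SX X_def by auto
    thus "(contr W x, contr W y) \<in> (relE W F)\<^sup>*" using rtr_sym by (meson rtrancl_trans)
  qed
  hence "spanning_tree_contr U W F" unfolding spanning_tree_contr_def relE_def[symmetric]
    using SF(4,5) EU finF X_def by auto
  thus ?thesis using SF(4) by auto
qed



fun pc :: "('a \<Rightarrow> 'a \<Rightarrow> real) \<Rightarrow> 'a list \<Rightarrow> real" where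
  "pc f (x#y#xs) = f x y + pc f (y#xs)"
| "pc f _ = 0"

lemma pc_append: "pc f (xs @ [a]) + pc f (a # ys) = pc f (xs @ a # ys)"
proof (induction xs)
  case Nil then show ?case by simp
next
  case (Cons x xs) then show ?case by (cases xs) auto
qed

lemma pc_mono: "(\<And>a b. a \<in> set xs \<Longrightarrow> b \<in> set xs \<Longrightarrow> f a b \<le> g a b) \<Longrightarrow> pc f xs \<le> pc g xs"
proof (induction f xs rule: pc.induct)
  case (1 f x y xs)
  have "pc f (y#xs) \<le> pc g (y#xs)" using 1 by auto
  moreover have "f x y \<le> g x y" using 1(2) by auto
  ultimately show ?case by simp
qed auto

lemma pc_zero: "pc (\<lambda>a b. 0) xs = 0"
  by (induction xs rule: induct_list012) auto

lemma pc_nonneg: "(\<And>a b. a \<in> set xs \<Longrightarrow> b \<in> set xs \<Longrightarrow> 0 \<le> f a b) \<Longrightarrow> 0 \<le> pc f xs"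
  using pc_mono[of xs "\<lambda>a b. 0" f] pc_zero[of xs] by auto

lemma pc_sum: "pc (\<lambda>a b. \<Sum>i\<in>I. f i a b) xs = (\<Sum>i\<in>I. pc (f i) xs)"
  by (induction xs rule: induct_list012) (auto simp: sum.distrib)

lemma pc_cmult: "pc (\<lambda>a b. c * f a b) xs = c * pc f xs"
  by (induction xs rule: induct_list012) (auto simp: algebra_simps)

lemma pc_abs: "xs \<noteq> [] \<Longrightarrow> \<bar>g (hd xs) - g (last xs)\<bar> \<le> pc (\<lambda>a b. \<bar>g a - g b\<bar>) xs"
proof (induction xs rule: induct_list012)
  case (3 x y xs)
  then show ?case by auto
qed auto

lemma pc_tri:
  assumes "\<And>x y z. x \<in> set xs \<Longrightarrow> y \<in> set xs \<Longrightarrow> z \<in> set xs \<Longrightarrow> d x z \<le> d x y + d y z"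
    and "\<And>x. x \<in> set xs \<Longrightarrow> d x x = 0" and "xs \<noteq> []"
  shows "d (hd xs) (last xs) \<le> pc d xs"
  using assms
proof (induction d xs rule: pc.induct)
  case (1 f x y xs)
  have "f y (last (y#xs)) \<le> pc f (y#xs)" using 1 by auto
  moreover have "f x (last (y#xs)) \<le> f x y + f y (last (y#xs))" using 1(2) by auto
  ultimately show ?case by simp
qed auto



lemma edge_len_Upair: "d u v = d v u \<Longrightarrow> edge_len d (Upair u v) = d u v"
  unfolding edge_len_def by (rule the_equality) auto

definition adj :: "'a uprod set \<Rightarrow> ('a \<times> 'a) set" where
  "adj T = {(u,v). Upair u v \<in> T}"

definition reach :: "'a uprod set \<Rightarrow> 'a \<Rightarrow> 'a set" where
  "reach T x = {y. (x,y) \<in> (adj T)\<^sup>*}"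

definition insd :: "'a uprod set \<Rightarrow> 'a set \<Rightarrow> 'a uprod set" where
  "insd T R = {e\<in>T. set_uprod e \<subseteq> R}"

lemma adj_sym: "sym (adj T)"
  unfolding adj_def sym_def by (auto, metis Upair_inject)

lemma reach_self: "x \<in> reach T x" unfolding reach_def by auto

lemma reach_closed: "y \<in> reach T x \<Longrightarrow> Upair y z \<in> T \<Longrightarrow> z \<in> reach T x"
  unfolding reach_def adj_def by (auto intro: rtrancl_into_rtrancl)

lemma reach_sym: "y \<in> reach T x \<Longrightarrow> x \<in> reach T y"
  unfolding reach_def by (meson adj_sym mem_Collect_eq sym_rtrancl symD)

lemma reach_trans: "y \<in> reach T x \<Longrightarrow> z \<in> reach T y \<Longrightarrow> z \<in> reach T x"
  unfolding reach_def by auto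

lemma reach_mono: "T \<subseteq> T' \<Longrightarrow> reach T x \<subseteq> reach T' x"
  unfolding reach_def adj_def by (auto elim: rtrancl_mono[THEN subsetD, rotated])

lemma reach_closed_set:
  assumes "x \<in> R" "\<And>y z. y \<in> R \<Longrightarrow> Upair y z \<in> T \<Longrightarrow> z \<in> R"
  shows "reach T x \<subseteq> R"
proof
  fix y assume "y \<in> reach T x"
  hence "(x,y) \<in> (adj T)\<^sup>*" unfolding reach_def by auto
  thus "y \<in> R" using assms by (induction rule: rtrancl_induct) (auto simp: adj_def)
qed

lemma reach_insert_same:
  assumes "a \<in> reach T x \<longleftrightarrow> b \<in> reach T x"
  shows "reach (insert (Upair a b) T) x = reach T x"
proof
  show "reach (insert (Upair a b) T) x \<subseteq> reach T x"
    apply (rule reach_closed_set)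
    using assms reach_self reach_closed by fastforce+
  show "reach T x \<subseteq> reach (insert (Upair a b) T) x" by (rule reach_mono) auto
qed

lemma reach_insert_cross:
  assumes "a \<in> reach T x" "b \<notin> reach T x"
  shows "reach (insert (Upair a b) T) x = reach T x \<union> reach T b"
proof
  show "reach (insert (Upair a b) T) x \<subseteq> reach T x \<union> reach T b"
    apply (rule reach_closed_set)
    using assms reach_self reach_closed by fastforce+
  have 1: "reach T x \<subseteq> reach (insert (Upair a b) T) x" by (rule reach_mono) auto
  have "b \<in> reach (insert (Upair a b) T) x" using 1 assms(1) reach_closed by fastforce
  moreover have "reach T b \<subseteq> reach (insert (Upair a b) T) b" by (rule reach_mono) auto
  ultimately show "reach T x \<union> reach T b \<subseteq> reach (insert (Upair a b) T) x"
    using 1 reach_trans by fastforce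
qed

lemma pc_splice:
  assumes "ws1 = A @ a # B" "ws2 \<noteq> []" "hd ws2 = b" "last ws2 = b"
  shows "pc d (A @ a # ws2 @ a # B) = pc d ws1 + pc d ws2 + d a b + d b a"
proof -
  obtain t where t: "ws2 = b # t" using assms by (cases ws2) auto
  obtain C where C: "ws2 = C @ [b]" using assms by (metis append_butlast_last_id)
  have 1: "pc d (A @ a # ws2 @ a # B) = pc d (A@[a]) + pc d (a # ws2 @ a # B)"
    using pc_append[of d A a "ws2 @ a # B"] by simp
  have 2: "pc d (a # ws2 @ a # B) = d a b + pc d (ws2 @ a # B)" using t by simp
  have 3: "pc d (ws2 @ a # B) = pc d (ws2 @ [a]) + pc d (a # B)" using pc_append[of d ws2 a B] by simp
  have 4: "pc d (ws2 @ [a]) = pc d ws2 + d b a" using pc_append[of d C b "[a]"] C by simp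
  have 5: "pc d ws1 = pc d (A@[a]) + pc d (a#B)" using pc_append[of d A a B] assms(1) by simp
  show ?thesis using 1 2 3 4 5 by simp
qed

lemma tour:
  assumes "finite T" "\<forall>e\<in>T. set_uprod e \<subseteq> V"
    and symd: "\<forall>a\<in>V. \<forall>b\<in>V. d a b = d b a" and nn: "\<forall>a\<in>V. \<forall>b\<in>V. 0 \<le> d a b"
  shows "\<exists>ws. ws \<noteq> [] \<and> hd ws = x \<and> last ws = x \<and> set ws = reach T x
            \<and> pc d ws \<le> 2 * weight d (insd T (reach T x))"
  using assms(1,2)
proof (induction T arbitrary: x rule: finite_induct)
  case empty
  have "reach {} x = {x}" unfolding reach_def adj_def by auto
  then show ?case by (intro exI[of _ "[x]"]) (auto simp: weight_def insd_def)
next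
  case (insert e T)
  obtain a0 b0 where e: "e = Upair a0 b0" by (cases e) auto
  have eV: "a0 \<in> V" "b0 \<in> V" using insert.prems e by auto
  have TV: "\<forall>e\<in>T. set_uprod e \<subseteq> V" using insert.prems by auto
  have wnn': "0 \<le> edge_len d e'" if "e' \<in> insert e T" for e'
  proof -
    obtain u v where "e' = Upair u v" by (cases e') auto
    thus ?thesis using that insert.prems symd nn edge_len_Upair[of d u v] by auto
  qed
  let ?R = "reach T x"
  show ?case
  proof (cases "a0 \<in> ?R \<longleftrightarrow> b0 \<in> ?R")
    case True
    hence R: "reach (insert e T) x = ?R" using reach_insert_same e by metis
    obtain ws where ws: "ws \<noteq> []" "hd ws = x" "last ws = x" "set ws = ?R"
      "pc d ws \<le> 2 * weight d (insd T ?R)" using insert.IH TV by blast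
    have "weight d (insd T ?R) \<le> weight d (insd (insert e T) ?R)"
      unfolding weight_def insd_def
      by (rule sum_mono2) (use insert.hyps wnn' in auto)
    then show ?thesis using ws R by (intro exI[of _ ws]) auto
  next
    case False
    then obtain a b where ab: "e = Upair a b" "a \<in> ?R" "b \<notin> ?R" "a \<in> V" "b \<in> V"
      using e eV by (metis Upair_inject)
    have R: "reach (insert e T) x = ?R \<union> reach T b" using reach_insert_cross ab by metis
    obtain ws1 where ws1: "ws1 \<noteq> []" "hd ws1 = x" "last ws1 = x" "set ws1 = ?R"
      "pc d ws1 \<le> 2 * weight d (insd T ?R)" using insert.IH TV by blast
    obtain ws2 where ws2: "ws2 \<noteq> []" "hd ws2 = b" "last ws2 = b" "set ws2 = reach T b"
      "pc d ws2 \<le> 2 * weight d (insd T (reach T b))" using insert.IH TV by blast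
    obtain A B where AB: "ws1 = A @ a # B" using ws1(4) ab(2) by (metis split_list)
    define ws where "ws = A @ a # ws2 @ a # B"
    have pcw: "pc d ws = pc d ws1 + pc d ws2 + 2 * d a b"
      using pc_splice[OF AB ws2(1-3)] symd ab unfolding ws_def by auto
    have hd: "hd ws = x"
    proof (cases A)
      case Nil thus ?thesis using AB ws1(2) ws_def by auto
    next
      case (Cons c C) thus ?thesis using AB ws1(2) ws_def by auto
    qed
    have lst: "last ws = x"
    proof (cases B)
      case Nil thus ?thesis using AB ws1(3) ws_def by auto
    next
      case (Cons c C) thus ?thesis using AB ws1(3) ws_def by auto
    qed
    have setw: "set ws = ?R \<union> reach T b" using AB ws1(4) ws2(4) ws_def ab(2) by auto
    have disj: "?R \<inter> reach T b = {}"
    proof (rule ccontr)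
      assume "?R \<inter> reach T b \<noteq> {}"
      then obtain y where "y \<in> ?R" "y \<in> reach T b" by auto
      hence "b \<in> ?R" using reach_sym reach_trans by metis
      thus False using ab by auto
    qed
    have split: "insd (insert e T) (?R \<union> reach T b) = insert e (insd T ?R \<union> insd T (reach T b))"
    proof
      show "insd (insert e T) (?R \<union> reach T b) \<subseteq> insert e (insd T ?R \<union> insd T (reach T b))"
      proof
        fix e' assume e': "e' \<in> insd (insert e T) (?R \<union> reach T b)"
        show "e' \<in> insert e (insd T ?R \<union> insd T (reach T b))"
        proof (cases "e' = e")
          case False
          hence T: "e' \<in> T" using e' unfolding insd_def by auto
          obtain u v where uv: "e' = Upair u v" by (cases e') auto
          have "Upair v u \<in> T" using T uv by (metis Upair_inject)
          hence "(u \<in> ?R \<and> v \<in> ?R) \<or> (u \<in> reach T b \<and> v \<in> reach T b)"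
            using e' T uv reach_closed unfolding insd_def by fastforce
          thus ?thesis using T uv unfolding insd_def by auto
        qed simp
      qed
      show "insert e (insd T ?R \<union> insd T (reach T b)) \<subseteq> insd (insert e T) (?R \<union> reach T b)"
        using ab reach_self unfolding insd_def by auto
    qed
    have fin: "finite (insd T ?R)" "finite (insd T (reach T b))"
      using insert.hyps unfolding insd_def by auto
    have notin: "e \<notin> insd T ?R \<union> insd T (reach T b)" using insert.hyps unfolding insd_def by auto
    have dj2: "insd T ?R \<inter> insd T (reach T b) = {}"
    proof (rule ccontr)
      assume "insd T ?R \<inter> insd T (reach T b) \<noteq> {}"
      then obtain e' where "set_uprod e' \<subseteq> ?R" "set_uprod e' \<subseteq> reach T b" unfolding insd_def by auto
      moreover obtain u v where "e' = Upair u v" by (cases e') auto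
      ultimately show False using disj by auto
    qed
    have "weight d (insd (insert e T) (?R \<union> reach T b)) =
        edge_len d e + weight d (insd T ?R) + weight d (insd T (reach T b))"
      unfolding split weight_def using fin notin dj2 by (simp add: sum.union_disjoint)
    moreover have "edge_len d e = d a b" using ab symd edge_len_Upair by metis
    ultimately show ?thesis using R ws1 ws2 pcw hd lst setw ws1(1)
      by (intro exI[of _ ws]) (auto simp: ws_def)
  qed
qed



locale fm =
  fixes V :: "'a set" and d :: "'a \<Rightarrow> 'a \<Rightarrow> real" and r :: 'a and M :: real
  assumes fmet: "finite_metric V d" and rV: "r \<in> V" and Mpos: "M > 0"
begin

lemma finV: "finite V" using fmet unfolding finite_metric_def by auto
lemma d0: "x \<in> V \<Longrightarrow> d x x = 0" using fmet unfolding finite_metric_def by auto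
lemma dsym: "x \<in> V \<Longrightarrow> y \<in> V \<Longrightarrow> d x y = d y x" using fmet unfolding finite_metric_def by auto
lemma dtri: "x \<in> V \<Longrightarrow> y \<in> V \<Longrightarrow> z \<in> V \<Longrightarrow> d x z \<le> d x y + d y z"
  using fmet unfolding finite_metric_def by auto
lemma dnn: "x \<in> V \<Longrightarrow> y \<in> V \<Longrightarrow> 0 \<le> d x y"
  using fmet unfolding finite_metric_def by (cases "x = y") (auto intro: less_imp_le)

lemma elen: "u \<in> V \<Longrightarrow> v \<in> V \<Longrightarrow> edge_len d (Upair u v) = d u v"
  using edge_len_Upair dsym by metis

lemma elen_nn: "e \<in> contr_edges U W \<Longrightarrow> U \<subseteq> V \<Longrightarrow> 0 \<le> edge_len d e"
  unfolding contr_edges_def using elen dnn by (force simp: subset_iff)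

definition Le :: "nat \<Rightarrow> 'a set" where "Le i = {u\<in>V. d r u \<le> 2^i * M}"
definition Lt :: "nat \<Rightarrow> 'a set" where "Lt i = (if i = 0 then {} else Le (i-1))"

lemma level_le_eq: "level_le V d r M i = Le i"
proof (induction i)
  case 0 show ?case unfolding level_le_def Le_def level_def by auto
next
  case (Suc i)
  have "level_le V d r M (Suc i) = level_le V d r M i \<union> level V d r M (Suc i)"
    unfolding level_le_def by (auto simp: atMost_Suc)
  also have "\<dots> = Le (Suc i)"
  proof -
    have "(2::real)^i * M \<le> 2^(Suc i) * M" using Mpos by simp
    thus ?thesis unfolding Suc Le_def level_def by (auto intro: order.trans)
  qed
  finally show ?case .
qed

lemma level_lt_eq: "level_lt V d r M i = Lt i"
proof (cases i)
  case 0 thus ?thesis unfolding level_lt_def Lt_def by auto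
next
  case (Suc k)
  have "level_lt V d r M i = level_le V d r M k" unfolding level_lt_def level_le_def Suc
    by (simp add: lessThan_Suc_atMost)
  thus ?thesis using level_le_eq Suc unfolding Lt_def by auto
qed

lemma r_Le: "r \<in> Le i" using rV d0 Mpos unfolding Le_def by auto
lemma Le_V: "Le i \<subseteq> V" unfolding Le_def by auto
lemma Lt_Le: "Lt i \<subseteq> Le i"
  unfolding Lt_def Le_def using Mpos by (auto simp: power_Suc[symmetric] intro: order.trans)

definition P :: "nat \<Rightarrow> 'a \<Rightarrow> 'a \<Rightarrow> bool" where
  "P i a b \<longleftrightarrow> max (d r a) (d r b) \<le> 2^(i+1)*M \<and> (i = 0 \<or> 2^(i-1)*M < max (d r a) (d r b))"

definition cl :: "nat \<Rightarrow> real \<Rightarrow> real" where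
  "cl i t = max (2^i*M) (min t (2^(i+1)*M))"

definition ch :: "nat \<Rightarrow> 'a \<Rightarrow> 'a \<Rightarrow> real" where
  "ch i a b = (if P i a b then d a b else 0) + \<bar>cl i (d r a) - cl i (d r b)\<bar>"

lemma sum2_le: "0 \<le> f a \<Longrightarrow> 0 \<le> f b \<Longrightarrow> sum f {a,b} \<le> f a + (f b::real)"
  by (cases "a = b") auto

lemma relE_step: "Upair u v \<in> E \<Longrightarrow> (contr W u, contr W v) \<in> (relE W E)\<^sup>*"
  unfolding relE_def by auto

lemma segment:
  assumes x: "x \<in> Le i" and y: "y \<in> Le i" and S: "set S \<subseteq> V - Le i"
  shows "\<exists>E. E \<subseteq> contr_edges (Le i) (Lt i) \<and> finite E \<and> weight d E \<le> pc (ch i) (x#S@[y])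
            \<and> (contr (Lt i) x, contr (Lt i) y) \<in> (relE (Lt i) E)\<^sup>*"
proof -
  let ?U = "Le i" and ?W = "Lt i" and ?s = "x#S@[y]"
  have sV: "set ?s \<subseteq> V" using x y S Le_V by auto
  have chnn: "0 \<le> ch i a b" if "a \<in> set ?s" "b \<in> set ?s" for a b
  proof -
    have "a \<in> V" "b \<in> V" using that sV by auto
    thus ?thesis using dnn[of a b] unfolding ch_def by auto
  qed
  have pcnn: "0 \<le> pc (ch i) ?s" using pc_nonneg chnn by blast
  have xV: "x \<in> V" and yV: "y \<in> V" using x y Le_V by auto
  show ?thesis
  proof (cases "x \<in> ?W \<and> y \<in> ?W")
    case True
    hence "contr ?W x = contr ?W y" unfolding contr_def by auto
    thus ?thesis using pcnn by (intro exI[of _ "{}"]) (auto simp: weight_def)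
  next
    case notW: False
    show ?thesis
    proof (cases "\<exists>s\<in>set S. 2^(i+1)*M < d r s")
      case True
      then obtain s where s: "s \<in> set S" "2^(i+1)*M < d r s" by auto
      obtain S1 S2 where S12: "S = S1 @ s # S2" using s(1) by (metis split_list)
      define E where "E = {e\<in>{Upair x r, Upair y r}. e \<in> contr_edges ?U ?W}"
      have EU: "E \<subseteq> contr_edges ?U ?W" and finE: "finite E" unfolding E_def by auto
      have conn: "(contr ?W z, contr ?W r) \<in> (relE ?W E)\<^sup>*" if "z \<in> {x,y}" for z
      proof (cases "Upair z r \<in> E")
        case True thus ?thesis using relE_step by metis
      next
        case False
        hence "\<not> (z \<noteq> r \<and> \<not> (z \<in> ?W \<and> r \<in> ?W))" using that x y r_Le
          unfolding E_def contr_edges_def by auto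
        hence "contr ?W z = contr ?W r" unfolding contr_def by auto
        thus ?thesis by auto
      qed
      have c: "(contr ?W x, contr ?W y) \<in> (relE ?W E)\<^sup>*"
        using conn[of x] conn[of y] rtr_sym by (meson insertCI rtrancl_trans)
      have "weight d E \<le> weight d {Upair x r, Upair y r}"
        unfolding weight_def E_def by (rule sum_mono2) (auto intro: elen_nn[OF _ Le_V] simp: rV xV yV elen dnn)
      also have "\<dots> \<le> d x r + d y r"
        unfolding weight_def using sum2_le[of "edge_len d" "Upair x r" "Upair y r"]
        by (simp add: elen xV yV rV dnn)
      also have "\<dots> \<le> 2 * (2^i*M)"
        using x y dsym[OF xV rV] dsym[OF yV rV] unfolding Le_def by auto
      also have "\<dots> \<le> pc (ch i) ?s"
      proof -
        let ?g = "\<lambda>a. cl i (d r a)"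
        have "(2::real)^i*M \<le> 2^(i+1)*M" using Mpos by simp
        hence gx: "?g x = 2^i*M" and gy: "?g y = 2^i*M" and gs: "?g s = 2^(i+1)*M"
          using x y s(2) dnn[OF rV xV] dnn[OF rV yV] unfolding cl_def Le_def by auto
        have sp: "pc (\<lambda>a b. \<bar>?g a - ?g b\<bar>) ?s =
            pc (\<lambda>a b. \<bar>?g a - ?g b\<bar>) ((x#S1) @ [s]) + pc (\<lambda>a b. \<bar>?g a - ?g b\<bar>) (s # S2 @ [y])"
          using pc_append[of _ "x#S1" s "S2@[y]"] S12 by simp
        have "\<bar>?g x - ?g s\<bar> \<le> pc (\<lambda>a b. \<bar>?g a - ?g b\<bar>) ((x#S1) @ [s])"
          using pc_abs[of "(x#S1) @ [s]" ?g] by simp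
        moreover have "\<bar>?g s - ?g y\<bar> \<le> pc (\<lambda>a b. \<bar>?g a - ?g b\<bar>) (s # S2 @ [y])"
          using pc_abs[of "s # S2 @ [y]" ?g] by simp
        moreover have "pc (\<lambda>a b. \<bar>?g a - ?g b\<bar>) ?s \<le> pc (ch i) ?s"
          by (rule pc_mono) (use sV dnn in \<open>auto simp: ch_def\<close>)
        moreover have "\<bar>?g x - ?g s\<bar> + \<bar>?g s - ?g y\<bar> = 2 * (2^i*M)" using gx gy gs Mpos by simp
        ultimately show ?thesis using sp by linarith
      qed
      finally show ?thesis using EU finE c by blast
    next
      case False
      hence Sb: "\<forall>s\<in>set S. d r s \<le> 2^(i+1)*M" by auto
      define E where "E = (if x = y then {} else {Upair x y})"
      have EU: "E \<subseteq> contr_edges ?U ?W" using notW x y unfolding E_def contr_edges_def by auto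
      have c: "(contr ?W x, contr ?W y) \<in> (relE ?W E)\<^sup>*"
        unfolding E_def by (cases "x = y") (auto intro: relE_step)
      have "weight d E \<le> d x y" unfolding E_def weight_def using elen xV yV d0 by auto
      also have "\<dots> \<le> pc d ?s" proof -
        have "d (hd ?s) (last ?s) \<le> pc d ?s"
          by (rule pc_tri) (use sV in \<open>auto intro!: dtri d0\<close>)
        thus ?thesis by simp
      qed
      also have "\<dots> \<le> pc (ch i) ?s"
      proof (rule pc_mono)
        fix a b assume ab: "a \<in> set ?s" "b \<in> set ?s"
        have aV: "a \<in> V" "b \<in> V" using ab sV by auto
        show "d a b \<le> ch i a b"
        proof (cases "a = b")
          case True thus ?thesis using d0 aV unfolding ch_def by auto
        next
          case False
          have up: "max (d r a) (d r b) \<le> 2^(i+1)*M"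
          proof -
            have h: "(2::real)^i*M \<le> 2^(i+1)*M" using Mpos by simp
            have "d r z \<le> 2^(i+1)*M" if "z \<in> set ?s" for z
            proof -
              have "z \<in> set S \<or> z = x \<or> z = y" using that by auto
              thus ?thesis using Sb x y h unfolding Le_def by (metis (no_types, lifting) mem_Collect_eq order.trans)
            qed
            then show ?thesis using ab by auto
          qed
          have "\<not> (a \<in> ?W \<and> b \<in> ?W)"
          proof
            assume abW: "a \<in> ?W \<and> b \<in> ?W"
            hence "a \<in> {x,y}" "b \<in> {x,y}" using ab S Lt_Le by auto
            thus False using abW notW False by auto
          qed
          hence "i = 0 \<or> 2^(i-1)*M < max (d r a) (d r b)"
            using aV unfolding Lt_def Le_def by (cases "i = 0") auto
          hence "P i a b" using up unfolding P_def by auto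
          thus ?thesis unfolding ch_def by auto
        qed
      qed
      finally show ?thesis using EU c unfolding E_def by auto
    qed
  qed
qed

end


context fm begin

lemma weight_union:
  assumes "finite A" "finite B" "\<forall>e\<in>A\<union>B. 0 \<le> edge_len d e"
  shows "weight d (A \<union> B) \<le> weight d A + weight d B"
proof -
  have "weight d (A \<union> B) + weight d (A \<inter> B) = weight d A + weight d B"
    unfolding weight_def using sum.union_inter[OF assms(1,2)] by simp
  moreover have "0 \<le> weight d (A \<inter> B)" unfolding weight_def using assms(3) by (auto intro: sum_nonneg)
  ultimately show ?thesis by linarith
qed

lemma path:
  "x \<in> Le i \<Longrightarrow> set S \<subseteq> V - Le i \<Longrightarrow> set Q \<subseteq> V \<Longrightarrow> last (x#S@Q) \<in> Le i \<Longrightarrow>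
   \<exists>E. E \<subseteq> contr_edges (Le i) (Lt i) \<and> finite E \<and> weight d E \<le> pc (ch i) (x#S@Q)
     \<and> (\<forall>u \<in> set (x#S@Q) \<inter> Le i. (contr (Lt i) x, contr (Lt i) u) \<in> (relE (Lt i) E)\<^sup>*)"
proof (induction Q arbitrary: x S)
  case Nil
  have "S = []"
  proof (rule ccontr)
    assume "S \<noteq> []"
    hence "last (x#S@[]) \<in> set S" by simp
    thus False using Nil by auto
  qed
  thus ?case by (intro exI[of _ "{}"]) (auto simp: weight_def)
next
  case (Cons q Q)
  show ?case
  proof (cases "q \<in> Le i")
    case False
    have "set (S@[q]) \<subseteq> V - Le i" using Cons False by auto
    moreover have "last (x#(S@[q])@Q) \<in> Le i" using Cons.prems by simp
    ultimately obtain E where E: "E \<subseteq> contr_edges (Le i) (Lt i)" "finite E"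
      "weight d E \<le> pc (ch i) (x#(S@[q])@Q)"
      "\<forall>u \<in> set (x#(S@[q])@Q) \<inter> Le i. (contr (Lt i) x, contr (Lt i) u) \<in> (relE (Lt i) E)\<^sup>*"
      using Cons.IH[of x "S@[q]"] Cons.prems by auto
    thus ?thesis by (intro exI[of _ E]) auto
  next
    case True
    obtain E1 where E1: "E1 \<subseteq> contr_edges (Le i) (Lt i)" "finite E1" "weight d E1 \<le> pc (ch i) (x#S@[q])"
      "(contr (Lt i) x, contr (Lt i) q) \<in> (relE (Lt i) E1)\<^sup>*"
      using segment[of x i q S] Cons.prems True by auto
    have "last (q#[]@Q) \<in> Le i" using Cons.prems by (cases Q) auto
    then obtain E2 where E2: "E2 \<subseteq> contr_edges (Le i) (Lt i)" "finite E2" "weight d E2 \<le> pc (ch i) (q#[]@Q)"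
      "\<forall>u \<in> set (q#[]@Q) \<inter> Le i. (contr (Lt i) q, contr (Lt i) u) \<in> (relE (Lt i) E2)\<^sup>*"
      using Cons.IH[of q "[]"] Cons.prems True by auto
    have nn: "\<forall>e\<in>E1\<union>E2. 0 \<le> edge_len d e" using E1(1) E2(1) elen_nn Le_V by blast
    have "weight d (E1 \<union> E2) \<le> weight d E1 + weight d E2" using weight_union E1 E2 nn by blast
    also have "\<dots> \<le> pc (ch i) (x#S@[q]) + pc (ch i) (q#Q)" using E1 E2 by simp
    also have "\<dots> = pc (ch i) (x#S@q#Q)" using pc_append[of _ "x#S" q Q] by simp
    finally have w: "weight d (E1 \<union> E2) \<le> pc (ch i) (x#S@q#Q)" .
    have m1: "(relE (Lt i) E1)\<^sup>* \<subseteq> (relE (Lt i) (E1\<union>E2))\<^sup>*" by (rule rtrancl_mono, rule relE_mono) auto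
    have m2: "(relE (Lt i) E2)\<^sup>* \<subseteq> (relE (Lt i) (E1\<union>E2))\<^sup>*" by (rule rtrancl_mono, rule relE_mono) auto
    have c: "\<forall>u \<in> set (x#S@q#Q) \<inter> Le i. (contr (Lt i) x, contr (Lt i) u) \<in> (relE (Lt i) (E1\<union>E2))\<^sup>*"
    proof
      fix u assume u: "u \<in> set (x#S@q#Q) \<inter> Le i"
      show "(contr (Lt i) x, contr (Lt i) u) \<in> (relE (Lt i) (E1\<union>E2))\<^sup>*"
      proof (cases "u = x")
        case False
        hence "u \<in> set (q#[]@Q) \<inter> Le i" using u Cons.prems by auto
        hence "(contr (Lt i) q, contr (Lt i) u) \<in> (relE (Lt i) (E1\<union>E2))\<^sup>*" using E2(4) m2 by auto
        moreover have "(contr (Lt i) x, contr (Lt i) q) \<in> (relE (Lt i) (E1\<union>E2))\<^sup>*" using E1(4) m1 by auto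
        ultimately show ?thesis by (meson rtrancl_trans)
      qed auto
    qed
    show ?thesis using E1 E2 w c by (intro exI[of _ "E1 \<union> E2"]) auto
  qed
qed

lemma level_E:
  assumes "ws \<noteq> []" "hd ws = r" "last ws = r" "set ws = V"
  shows "\<exists>E. E \<subseteq> contr_edges (Le i) (Lt i) \<and> finite E \<and> weight d E \<le> pc (ch i) ws
     \<and> (\<forall>x\<in>Le i. \<forall>y\<in>Le i. (contr (Lt i) x, contr (Lt i) y) \<in> (relE (Lt i) E)\<^sup>*)"
proof -
  have ws: "r # [] @ tl ws = ws" using assms by (cases ws) auto
  have tV: "set (tl ws) \<subseteq> V" using assms(4) by (cases ws) auto
  have la: "last (r#[]@tl ws) \<in> Le i" unfolding ws using assms(3) r_Le by simp
  obtain E where E: "E \<subseteq> contr_edges (Le i) (Lt i)" "finite E" "weight d E \<le> pc (ch i) (r#[]@tl ws)"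
     "\<forall>u \<in> set (r#[]@tl ws) \<inter> Le i. (contr (Lt i) r, contr (Lt i) u) \<in> (relE (Lt i) E)\<^sup>*"
    using path[of r i "[]" "tl ws", OF r_Le _ tV la] by auto
  have E3: "weight d E \<le> pc (ch i) ws" using E(3) unfolding ws .
  have E4: "\<forall>u \<in> V \<inter> Le i. (contr (Lt i) r, contr (Lt i) u) \<in> (relE (Lt i) E)\<^sup>*"
    using E(4) unfolding ws assms(4) .
  have "\<forall>x\<in>Le i. \<forall>y\<in>Le i. (contr (Lt i) x, contr (Lt i) y) \<in> (relE (Lt i) E)\<^sup>*"
  proof (intro ballI)
    fix x y assume xy: "x \<in> Le i" "y \<in> Le i"
    hence "(contr (Lt i) r, contr (Lt i) x) \<in> (relE (Lt i) E)\<^sup>*"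
      "(contr (Lt i) r, contr (Lt i) y) \<in> (relE (Lt i) E)\<^sup>*" using E4 Le_V by auto
    thus "(contr (Lt i) x, contr (Lt i) y) \<in> (relE (Lt i) E)\<^sup>*"
      by (meson rtr_sym rtrancl_trans)
  qed
  thus ?thesis using E(1,2) E3 by blast
qed

lemma H_bound:
  assumes "ws \<noteq> []" "hd ws = r" "last ws = r" "set ws = V" "MST_contr d (Le i) (Lt i) Hi"
  shows "weight d Hi \<le> pc (ch i) ws"
proof -
  obtain E where E: "E \<subseteq> contr_edges (Le i) (Lt i)" "finite E" "weight d E \<le> pc (ch i) ws"
     "\<forall>x\<in>Le i. \<forall>y\<in>Le i. (contr (Lt i) x, contr (Lt i) y) \<in> (relE (Lt i) E)\<^sup>*"
    using level_E[OF assms(1-4), of i] by (elim exE conjE) (rule that)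
  have finLe: "finite (Le i)" by (rule finite_subset[OF Le_V finV])
  obtain F where F: "F \<subseteq> E" "spanning_tree_contr (Le i) (Lt i) F"
    using prim[OF finLe r_Le E(1,2,4)] by blast
  have "weight d Hi \<le> weight d F" using assms(5) F(2) unfolding MST_contr_def by (elim conjE allE impE)
  also have "\<dots> \<le> weight d E" unfolding weight_def
  proof (rule sum_mono2)
    show "finite E" by fact
    show "F \<subseteq> E" by fact
    show "0 \<le> edge_len d b" if "b \<in> E - F" for b using that E(1) elen_nn[OF _ Le_V] by blast
  qed
  finally show ?thesis using E by linarith
qed

end


lemma aux_clamp: "(0::real) < M \<Longrightarrow> M \<le> K \<Longrightarrow> min (max x M) K + max K (min x (2*K)) - K = min (max x M) (2*K)"
  by (simp add: min_def max_def)

lemma aux_lip: "(s::real) \<le> t \<Longrightarrow> min (max t M) K - min (max s M) K \<le> t - s"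
  by (simp add: min_def max_def)

context fm begin

lemma cl_mono: "s \<le> t \<Longrightarrow> cl i s \<le> cl i t"
  unfolding cl_def by simp

lemma cl_sum: "(\<Sum>i<N. cl i x - 2^i*M) = min (max x M) (2^N*M) - M"
proof (induction N)
  case 0 show ?case using Mpos by (simp add: min_def max_def)
next
  case (Suc N)
  have K: "M \<le> 2^N*M" using Mpos by simp
  have "(\<Sum>i<Suc N. cl i x - 2^i*M) = min (max x M) (2^N*M) - M + (cl N x - 2^N*M)"
    using Suc by simp
  also have "\<dots> = min (max x M) (2*(2^N*M)) - M"
    using aux_clamp[OF Mpos K, of x] unfolding cl_def by (simp add: algebra_simps)
  finally show ?case by (simp add: algebra_simps)
qed

lemma sum_cl: "(\<Sum>i<N. \<bar>cl i s - cl i t\<bar>) \<le> \<bar>s - t\<bar>"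
proof -
  have key: "(\<Sum>i<N. \<bar>cl i s - cl i t\<bar>) \<le> t - s" if "s \<le> t" for s t
  proof -
    have "(\<Sum>i<N. \<bar>cl i s - cl i t\<bar>) = (\<Sum>i<N. (cl i t - 2^i*M) - (cl i s - 2^i*M))"
      using cl_mono[OF that] by (intro sum.cong) auto
    also have "\<dots> = (\<Sum>i<N. cl i t - 2^i*M) - (\<Sum>i<N. cl i s - 2^i*M)"
      by (rule sum_subtractf)
    also have "\<dots> = min (max t M) (2^N*M) - min (max s M) (2^N*M)"
      unfolding cl_sum by simp
    also have "\<dots> \<le> t - s" using aux_lip[OF that] .
    finally show ?thesis .
  qed
  show ?thesis
  proof (cases "s \<le> t")
    case True thus ?thesis using key[OF True] by simp
  next
    case False
    hence "(\<Sum>i<N. \<bar>cl i t - cl i s\<bar>) \<le> s - t" using key[of t s] by simp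
    moreover have "(\<Sum>i<N. \<bar>cl i t - cl i s\<bar>) = (\<Sum>i<N. \<bar>cl i s - cl i t\<bar>)" by (simp add: abs_minus_commute)
    ultimately show ?thesis using False by simp
  qed
qed

lemma sum_P: assumes "0 \<le> (c::real)" shows "(\<Sum>i<N. if P i a b then c else 0) \<le> 2*c"
proof -
  let ?K = "{i\<in>{..<N}. P i a b}"
  have eq: "(\<Sum>i<N. if P i a b then c else 0) = real (card ?K) * c"
    using sum.inter_filter[of "{..<N}" "\<lambda>_. c" "\<lambda>i. P i a b", symmetric] by simp
  have "card ?K \<le> 2"
  proof (cases "?K = {}")
    case True show ?thesis unfolding True by simp
  next
    case False
    define i0 where "i0 = Min ?K"
    have finK: "finite ?K" by simp
    have i0K: "i0 \<in> ?K" unfolding i0_def by (rule Min_in[OF finK False])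
    have "?K \<subseteq> {i0, Suc i0}"
    proof
      fix j assume j: "j \<in> ?K"
      have "i0 \<le> j" unfolding i0_def by (rule Min_le[OF finK j])
      moreover have "\<not> Suc (Suc i0) \<le> j"
      proof
        assume h: "Suc (Suc i0) \<le> j"
        hence "(2::real)^(i0+1) \<le> 2^(j-1)" by (intro power_increasing) auto
        hence "(2::real)^(i0+1)*M \<le> 2^(j-1)*M" using Mpos by simp
        moreover have "max (d r a) (d r b) \<le> 2^(i0+1)*M" using i0K unfolding P_def by auto
        moreover have "2^(j-1)*M < max (d r a) (d r b)" using j h unfolding P_def by auto
        ultimately show False by linarith
      qed
      ultimately show "j \<in> {i0, Suc i0}" by auto
    qed
    hence "card ?K \<le> card {i0, Suc i0}" by (intro card_mono) auto
    thus ?thesis by simp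
  qed
  hence "real (card ?K) * c \<le> 2 * c" using assms by (simp add: mult_right_mono)
  thus ?thesis using eq by simp
qed

lemma sum_ch: assumes "a \<in> V" "b \<in> V" shows "(\<Sum>i<N. ch i a b) \<le> 3 * d a b"
proof -
  have "(\<Sum>i<N. ch i a b) = (\<Sum>i<N. if P i a b then d a b else 0) + (\<Sum>i<N. \<bar>cl i (d r a) - cl i (d r b)\<bar>)"
    unfolding ch_def by (simp add: sum.distrib)
  also have "\<dots> \<le> 2 * d a b + \<bar>d r a - d r b\<bar>"
    using sum_P[where c="d a b" and N=N and a=a and b=b] dnn[OF assms] sum_cl[where N=N and s="d r a" and t="d r b"] by linarith
  also have "\<bar>d r a - d r b\<bar> \<le> d a b"
    using dtri[OF rV assms] dtri[OF rV assms(2,1)] dsym[OF assms] by linarith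
  finally show ?thesis by linarith
qed

lemma conv:
  assumes "(Some a, z) \<in> {(contr {} u, contr {} v) | u v. Upair u v \<in> T}\<^sup>*"
  shows "\<exists>y. z = Some y \<and> y \<in> reach T a"
  using assms
proof (induction rule: rtrancl_induct)
  case base thus ?case using reach_self by auto
next
  case (step z z')
  then obtain y where y: "z = Some y" "y \<in> reach T a" by auto
  from step(2) obtain u v where uv: "z = contr {} u" "z' = contr {} v" "Upair u v \<in> T" by auto
  have "u = y" using uv y unfolding contr_def by auto
  thus ?case using uv y reach_closed unfolding contr_def by auto
qed

lemma contr_empty: "contr {} x = Some x" by (simp add: contr_def)

lemma contr_edges_V: "U \<subseteq> V \<Longrightarrow> contr_edges U W \<subseteq> contr_edges V {}"
  unfolding contr_edges_def by blast

lemma weight_UN: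
  assumes "finite I" "\<forall>i\<in>I. finite (A i) \<and> A i \<subseteq> contr_edges V {}"
  shows "weight d (\<Union>i\<in>I. A i) \<le> (\<Sum>i\<in>I. weight d (A i))"
  using assms
proof (induction I rule: finite_induct)
  case empty thus ?case by (simp add: weight_def)
next
  case (insert j I)
  have "weight d (\<Union>i\<in>insert j I. A i) = weight d (A j \<union> (\<Union>i\<in>I. A i))" by simp
  also have "\<dots> \<le> weight d (A j) + weight d (\<Union>i\<in>I. A i)"
  proof (rule weight_union)
    show "finite (A j)" "finite (\<Union>i\<in>I. A i)" using insert by auto
    show "\<forall>e\<in>A j \<union> (\<Union>i\<in>I. A i). 0 \<le> edge_len d e"
      using insert.prems elen_nn[of _ V "{}"] by blast
  qed
  also have "\<dots> \<le> weight d (A j) + (\<Sum>i\<in>I. weight d (A i))" using insert by auto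
  finally show ?case using insert by simp
qed

lemma main:
  assumes T: "spanning_tree_contr V {} T" and Hs: "\<forall>i. MST_contr d (Le i) (Lt i) (Hs i)"
  shows "weight d (\<Union>i. Hs i) \<le> 6 * weight d T"
proof -
  have TE: "T \<subseteq> contr_edges V {}" using T unfolding spanning_tree_contr_def by (elim conjE)
  have finT: "finite T" using T unfolding spanning_tree_contr_def by (elim conjE)
  have TV: "\<forall>e\<in>T. set_uprod e \<subseteq> V" using TE unfolding contr_edges_def by auto
  have Tnn: "\<forall>e\<in>T. 0 \<le> edge_len d e" using TE elen_nn[of _ V "{}"] by blast
  have reachV: "reach T r = V"
  proof
    show "reach T r \<subseteq> V"
    proof (rule reach_closed_set)
      show "r \<in> V" by (rule rV)
      fix y z assume "y \<in> V" "Upair y z \<in> T"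
      hence "set_uprod (Upair y z) \<subseteq> V" using TV by blast
      thus "z \<in> V" by simp
    qed
    show "V \<subseteq> reach T r"
    proof
      fix x assume x: "x \<in> V"
      have "\<forall>x\<in>V. \<forall>y\<in>V. (contr {} x, contr {} y) \<in> {(contr {} u, contr {} v) | u v. Upair u v \<in> T}\<^sup>*"
        using T unfolding spanning_tree_contr_def by (elim conjE)
      hence "(contr {} r, contr {} x) \<in> {(contr {} u, contr {} v) | u v. Upair u v \<in> T}\<^sup>*"
        using x rV by (elim ballE) auto
      hence "(Some r, Some x) \<in> {(contr {} u, contr {} v) | u v. Upair u v \<in> T}\<^sup>*"
        by (simp only: contr_empty)
      from conv[OF this] show "x \<in> reach T r" by (elim exE conjE) simp
    qed
  qed
  obtain ws where ws: "ws \<noteq> []" "hd ws = r" "last ws = r" "set ws = reach T r"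
      "pc d ws \<le> 2 * weight d (insd T (reach T r))"
  proof -
    have "\<forall>a\<in>V. \<forall>b\<in>V. d a b = d b a" using dsym by blast
    moreover have "\<forall>a\<in>V. \<forall>b\<in>V. 0 \<le> d a b" using dnn by blast
    ultimately show ?thesis using tour[OF finT TV, of d r] that by blast
  qed
  have "insd T (reach T r) = T" using TV reachV unfolding insd_def by auto
  hence pcws: "pc d ws \<le> 2 * weight d T" using ws(5) by simp
  have wsV: "set ws = V" using ws(4) reachV by simp
  obtain N where N: "\<forall>u\<in>V. d r u \<le> 2^N*M"
  proof -
    obtain N where "Max (d r ` V) / M < 2^N" using real_arch_pow[of 2] by (meson one_less_numeral_iff semiring_norm(76))
    hence "Max (d r ` V) < 2^N*M" using Mpos by (simp add: divide_less_eq)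
    moreover have "\<forall>u\<in>V. d r u \<le> Max (d r ` V)" using finV by auto
    ultimately show ?thesis using that by (meson less_eq_real_def order.trans)
  qed
  have HsE: "Hs i \<subseteq> contr_edges (Le i) (Lt i) \<and> finite (Hs i)" for i
  proof -
    have "MST_contr d (Le i) (Lt i) (Hs i)" using Hs by blast
    thus ?thesis unfolding MST_contr_def spanning_tree_contr_def by (elim conjE) (intro conjI)
  qed
  have big: "Hs i = {}" if "i > N" for i
  proof -
    have "(2::real)^N*M \<le> 2^(i-1)*M" using that Mpos by (intro mult_right_mono power_increasing) auto
    have "Le (i-1) = V"
    proof
      show "Le (i-1) \<subseteq> V" by (rule Le_V)
      show "V \<subseteq> Le (i-1)"
      proof
        fix u assume "u \<in> V"
        hence "d r u \<le> 2^(i-1)*M" using N \<open>(2::real)^N*M \<le> 2^(i-1)*M\<close> by fastforce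
        thus "u \<in> Le (i-1)" using \<open>u \<in> V\<close> unfolding Le_def by blast
      qed
    qed
    hence "Lt i = V" using that unfolding Lt_def by simp
    moreover have "Lt i \<subseteq> Le i" by (rule Lt_Le)
    ultimately have "Le i = V" using Le_V by blast
    hence "contr_edges (Le i) (Lt i) = {}" using \<open>Lt i = V\<close> unfolding contr_edges_def by auto
    thus ?thesis using HsE[of i] by blast
  qed
  have UN: "(\<Union>i. Hs i) = (\<Union>i\<in>{..<Suc N}. Hs i)"
  proof
    show "(\<Union>i. Hs i) \<subseteq> (\<Union>i\<in>{..<Suc N}. Hs i)"
    proof
      fix e assume "e \<in> (\<Union>i. Hs i)"
      then obtain i where i: "e \<in> Hs i" by blast
      hence "\<not> i > N" using big by blast
      thus "e \<in> (\<Union>i\<in>{..<Suc N}. Hs i)" using i by auto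
    qed
  qed blast
  have "weight d (\<Union>i. Hs i) \<le> (\<Sum>i<Suc N. weight d (Hs i))"
    unfolding UN
  proof (rule weight_UN)
    show "\<forall>i\<in>{..<Suc N}. finite (Hs i) \<and> Hs i \<subseteq> contr_edges V {}"
      using HsE contr_edges_V[OF Le_V] by blast
  qed simp
  also have "\<dots> \<le> (\<Sum>i<Suc N. pc (ch i) ws)"
    by (rule sum_mono) (rule H_bound[OF ws(1-3) wsV], use Hs in blast)
  also have "\<dots> = pc (\<lambda>a b. \<Sum>i<Suc N. ch i a b) ws" by (rule pc_sum[symmetric])
  also have "\<dots> \<le> pc (\<lambda>a b. 3 * d a b) ws"
  proof (rule pc_mono)
    fix a b assume "a \<in> set ws" "b \<in> set ws"
    thus "(\<Sum>i<Suc N. ch i a b) \<le> 3 * d a b" using sum_ch[of a b "Suc N"] wsV by simp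
  qed
  also have "\<dots> = 3 * pc d ws" by (rule pc_cmult)
  also have "\<dots> \<le> 6 * weight d T" using pcws by linarith
  finally show ?thesis .
qed

end

theorem lemma5:
  fixes V :: "'a set" and d :: "'a \<Rightarrow> 'a \<Rightarrow> real" and r :: 'a and M :: real
    and H :: "'a uprod set"
  assumes "finite_metric V d"
    and "r \<in> V"
    and "M > 0"
    and "level_prim_tree V d r M H"
  shows "weight d H \<le> 8 * MST_weight V d"
proof -
  interpret fm V d r M using assms(1-3) by unfold_locales
  obtain Hs where Hs: "\<forall>i. MST_contr d (level_le V d r M i) (level_lt V d r M i) (Hs i)" "H = (\<Union>i. Hs i)"
    using assms(4) unfolding level_prim_tree_def by blast
  have Hs': "\<forall>i. MST_contr d (Le i) (Lt i) (Hs i)" using Hs(1) level_le_eq level_lt_eq by simp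
  let ?S = "{weight d F | F. spanning_tree_contr V {} F}"
  have finE: "finite (contr_edges V {})"
  proof (rule finite_subset)
    show "contr_edges V {} \<subseteq> (\<lambda>(u,v). Upair u v) ` (V \<times> V)" unfolding contr_edges_def by auto
    show "finite ((\<lambda>(u,v). Upair u v) ` (V \<times> V))" using finV by simp
  qed
  have "?S \<subseteq> weight d ` Pow (contr_edges V {})"
  proof
    fix w assume "w \<in> ?S"
    then obtain F where F: "w = weight d F" "spanning_tree_contr V {} F" by blast
    have "F \<subseteq> contr_edges V {}" using F(2) unfolding spanning_tree_contr_def by (elim conjE)
    thus "w \<in> weight d ` Pow (contr_edges V {})" using F(1) by blast
  qed
  hence finS: "finite ?S" using finE finite_subset by blast
  have conn: "\<forall>x\<in>V. \<forall>y\<in>V. (contr {} x, contr {} y) \<in> (relE {} (contr_edges V {}))\<^sup>*"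
  proof (intro ballI)
    fix x y assume "x \<in> V" "y \<in> V"
    show "(contr {} x, contr {} y) \<in> (relE {} (contr_edges V {}))\<^sup>*"
    proof (cases "x = y")
      case False
      hence "Upair x y \<in> contr_edges V {}" using \<open>x \<in> V\<close> \<open>y \<in> V\<close> unfolding contr_edges_def by blast
      thus ?thesis by (rule relE_step)
    qed simp
  qed
  obtain F0 where "spanning_tree_contr V {} F0"
    using prim[OF finV rV subset_refl finE conn] by blast
  hence neS: "?S \<noteq> {}" by auto
  have "MST_weight V d \<in> ?S" unfolding MST_weight_def using Min_in[OF finS neS] .
  then obtain T where T: "spanning_tree_contr V {} T" "MST_weight V d = weight d T" by auto
  have "T \<subseteq> contr_edges V {}" using T(1) unfolding spanning_tree_contr_def by (elim conjE)
  hence "0 \<le> weight d T" unfolding weight_def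
    using elen_nn[of _ V "{}"] by (intro sum_nonneg) blast
  moreover have "weight d H \<le> 6 * weight d T" using main[OF T(1) Hs'] Hs(2) by simp
  ultimately show ?thesis using T(2) by linarith
qed


end
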